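(* Let $I=\{1,2\}$, $J=\{-1,-2\}$, and let $\{\tau_{m,n}(\boldsymbol t)\}_{(m,n)\in\mathbb Z^2}$ be a nowhere-vanishing solution of the lattice $q$-UC hierarchy satisfying the homogeneity condition $\tau_{m,n}(q\boldsymbol t)=q^{d_{m,n}}\tau_{m,n}(\boldsymbol t)$, where $d_{m,n}\in\mathbb C$ satisfy $d_{m,n}+d_{m+1,n+1}=d_{m,n+1}+d_{m+1,n}$. Put $w_{m,n}=\tau_{m+1,n}/\tau_{m,n+1}$, $c_{m,n}=q^{d_{m+1,n}-d_{m,n+1}}$ (so that $T_1T_2(w_{m,n})=c_{m,n}T_{-1}T_{-2}(w_{m,n})$), and $$f_{m,n}=\frac{w^{(1)}_{m,n}}{w^{(-1)}_{m,n}},\qquad g_{m,n}=\frac{w^{(1,-1)}_{m,n}}{w^{(-1,-2)}_{m,n}}.$$ Then, with $T=T_1T_2$ and whenever the denominators are nonzero, $$\frac{T(f_{m,n})}{f_{m+1,n+1}}=\frac{c_{m,n}}{c_{m,n+1}}\cdot\frac{\bigl(g_{m+1,n}-\frac{t_1}{t_{-2}}\bigr)\bigl(g_{m,n+1}-c_{m,n+1}\frac{t_{-1}}{t_2}\bigr)}{\bigl(g_{m,n+1}-\frac{t_1}{t_{-2}}\bigr)\bigl(g_{m+1,n}-c_{m+1,n}\frac{t_{-1}}{t_2}\bigr)},$$ $$\frac{g_{m,n}}{T^{-1}(g_{m+1,n+1})}=\frac{c_{m+1,n}}{c_{m+1,n+1}}\cdot\frac{\bigl(f_{m+1,n}-\frac{t_1}{t_{-1}}\bigr)\bigl(f_{m,n+1}-qc_{m,n+1}\frac{t_{-2}}{t_2}\bigr)}{\bigl(f_{m,n+1}-\frac{t_1}{t_{-1}}\bigr)\bigl(f_{m+1,n}-qc_{m+1,n}\frac{t_{-2}}{t_2}\bigr)}.$$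 Consequently, $T$ acts on the variables $f_{m,n},g_{m,n}$ by birational transformations: $T^{\pm1}(f_{m,n}),T^{\pm1}(g_{m,n})$ are rational functions of the $f_{k,l},g_{k,l}$ with coefficients rational in $t_{\pm1},t_{\pm2}$ and the $c_{k,l}$. Equivalently, with $\alpha=t_1/t_{-2}$, $\beta=t_{-1}/t_2$, $\gamma=t_1/t_{-1}$, $\delta=t_{-2}/t_2$ (so $\alpha\delta/(\beta\gamma)=1$ and $T:(\alpha,\beta,\gamma,\delta)\mapsto(q\alpha,\beta/q,q\gamma,\delta/q)$), writing $\overline F=T(F)$: $$\overline{f_{m,n}}=\frac{c_{m,n}}{c_{m,n+1}}\frac{(g_{m+1,n}-\alpha)(g_{m,n+1}-c_{m,n+1}\beta)}{(g_{m,n+1}-\alpha)(g_{m+1,n}-c_{m+1,n}\beta)}f_{m+1,n+1},$$ $$\overline{g_{m,n}}=\frac{c_{m+1,n}}{c_{m+1,n+1}}\frac{(\overline{f_{m+1,n}}-q\gamma)(\overline{f_{m,n+1}}-c_{m,n+1}\delta)}{(\overline{f_{m,n+1}}-q\gamma)(\overline{f_{m+1,n}}-c_{m+1,n}\delta)}g_{m+1,n+1}.$$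
   Context: $q\in\mathbb C^*$, $\boldsymbol t=(t_1,t_2,t_{-1},t_{-2})$. $T_k$ is the $q$-shift: $T_k(t_k)=qt_k$ for $k\in\{1,2\}$, $T_k(t_k)=q^{-1}t_k$ for $k\in\{-1,-2\}$, $T_k(t_l)=t_l$ for $l\ne k$. Notation: $F^{(i_1,\dots,i_r)}=T_{i_1}\cdots T_{i_r}(F)$. The lattice $q$-UC hierarchy is the system $$t_iT_i(\tau_{m,n+1})T_j(\tau_{m+1,n})-t_jT_j(\tau_{m,n+1})T_i(\tau_{m+1,n})=(t_i-t_j)T_iT_j(\tau_{m,n})\tau_{m+1,n+1}$$ for all $i,j\in\{1,2,-1,-2\}$ and all $(m,n)\in\mathbb Z^2$. *)

theory Defs
  imports "HOL-Analysis.Analysis"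
begin

text \<open>Indices of the time variables: P1, P2, N1, N2 stand for 1, 2, -1, -2.
  A point t = (t_1,t_2,t_{-1},t_{-2}) is a function ix => complex.\<close>

datatype ix = P1 | P2 | N1 | N2

definition shiftT :: "complex \<Rightarrow> ix \<Rightarrow> (ix \<Rightarrow> complex) \<Rightarrow> (ix \<Rightarrow> complex)" where
  "shiftT q k t = t(k := (if k = P1 \<or> k = P2 then q * t k else t k / q))"

definition Top :: "complex \<Rightarrow> ix \<Rightarrow> ((ix \<Rightarrow> complex) \<Rightarrow> complex) \<Rightarrow> ((ix \<Rightarrow> complex) \<Rightarrow> complex)" where
  "Top q k F = (\<lambda>t. F (shiftT q k t))"

definition TT :: "complex \<Rightarrow> ((ix \<Rightarrow> complex) \<Rightarrow> complex) \<Rightarrow> ((ix \<Rightarrow> complex) \<Rightarrow> complex)" where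
  "TT q F = Top q P1 (Top q P2 F)"

definition TTinv :: "complex \<Rightarrow> ((ix \<Rightarrow> complex) \<Rightarrow> complex) \<Rightarrow> ((ix \<Rightarrow> complex) \<Rightarrow> complex)" where
  "TTinv q F = Top (inverse q) P1 (Top (inverse q) P2 F)"

definition tdom :: "(ix \<Rightarrow> complex) set" where
  "tdom = {t. \<forall>i. t i \<noteq> 0}"

definition qUC_hierarchy :: "complex \<Rightarrow> (int \<Rightarrow> int \<Rightarrow> (ix \<Rightarrow> complex) \<Rightarrow> complex) \<Rightarrow> bool" where
  "qUC_hierarchy q \<tau> \<longleftrightarrow>
    (\<forall>i j m n t. t \<in> tdom \<longrightarrow>
      t i * Top q i (\<tau> m (n+1)) t * Top q j (\<tau> (m+1) n) t
      - t j * Top q j (\<tau> m (n+1)) t * Top q i (\<tau> (m+1) n) t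
      = (t i - t j) * Top q i (Top q j (\<tau> m n)) t * \<tau> (m+1) (n+1) t)"

definition nowhere_vanishing :: "(int \<Rightarrow> int \<Rightarrow> (ix \<Rightarrow> complex) \<Rightarrow> complex) \<Rightarrow> bool" where
  "nowhere_vanishing \<tau> \<longleftrightarrow> (\<forall>m n t. t \<in> tdom \<longrightarrow> \<tau> m n t \<noteq> 0)"

definition wfun :: "(int \<Rightarrow> int \<Rightarrow> (ix \<Rightarrow> complex) \<Rightarrow> complex) \<Rightarrow> int \<Rightarrow> int \<Rightarrow> (ix \<Rightarrow> complex) \<Rightarrow> complex" where
  "wfun \<tau> m n = (\<lambda>t. \<tau> (m+1) n t / \<tau> m (n+1) t)"

definition cfun :: "complex \<Rightarrow> (int \<Rightarrow> int \<Rightarrow> complex) \<Rightarrow> int \<Rightarrow> int \<Rightarrow> complex" where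
  "cfun q d m n = q powr (d (m+1) n - d m (n+1))"

definition ffun :: "complex \<Rightarrow> (int \<Rightarrow> int \<Rightarrow> (ix \<Rightarrow> complex) \<Rightarrow> complex) \<Rightarrow> int \<Rightarrow> int \<Rightarrow> (ix \<Rightarrow> complex) \<Rightarrow> complex" where
  "ffun q \<tau> m n = (\<lambda>t. Top q P1 (wfun \<tau> m n) t / Top q N1 (wfun \<tau> m n) t)"

definition gfun :: "complex \<Rightarrow> (int \<Rightarrow> int \<Rightarrow> (ix \<Rightarrow> complex) \<Rightarrow> complex) \<Rightarrow> int \<Rightarrow> int \<Rightarrow> (ix \<Rightarrow> complex) \<Rightarrow> complex" where
  "gfun q \<tau> m n = (\<lambda>t. Top q P1 (Top q N1 (wfun \<tau> m n)) t / Top q N1 (Top q N2 (wfun \<tau> m n)) t)"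

end

theory Submission imports Defs begin

definition pt :: "complex \<Rightarrow> (ix\<Rightarrow>complex) \<Rightarrow> int \<Rightarrow> int \<Rightarrow> int \<Rightarrow> int \<Rightarrow> ix \<Rightarrow> complex" where
 "pt q s a b c e = (\<lambda>i. case i of P1 \<Rightarrow> s P1 * q powi a | P2 \<Rightarrow> s P2 * q powi b
     | N1 \<Rightarrow> s N1 * q powi (-c) | N2 \<Rightarrow> s N2 * q powi (-e))"

lemma pt_0: "pt q s 0 0 0 0 = s"
  by (rule ext) (simp add: pt_def split: ix.split)

lemma pt_in: "s \<in> tdom \<Longrightarrow> q \<noteq> 0 \<Longrightarrow> pt q s a b c e \<in> tdom"
  by (auto simp: tdom_def pt_def split: ix.split)

lemma pt_comp: "pt q s a b c e P1 = s P1 * q powi a" "pt q s a b c e P2 = s P2 * q powi b"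
  "pt q s a b c e N1 = s N1 * q powi (-c)" "pt q s a b c e N2 = s N2 * q powi (-e)"
  by (simp_all add: pt_def)

lemma shP1: "q \<noteq> 0 \<Longrightarrow> shiftT q P1 (pt q s a b c e) = pt q s (a+1) b c e"
  by (rule ext) (simp add: shiftT_def pt_def power_int_add_1 split: ix.split)
lemma shP2: "q \<noteq> 0 \<Longrightarrow> shiftT q P2 (pt q s a b c e) = pt q s a (b+1) c e"
  by (rule ext) (simp add: shiftT_def pt_def power_int_add_1 split: ix.split)
lemma shN1: "q \<noteq> 0 \<Longrightarrow> shiftT q N1 (pt q s a b c e) = pt q s a b (c+1) e"
  by (rule ext) (simp add: shiftT_def pt_def power_int_diff split: ix.split)
lemma shN2: "q \<noteq> 0 \<Longrightarrow> shiftT q N2 (pt q s a b c e) = pt q s a b c (e+1)"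
  by (rule ext) (simp add: shiftT_def pt_def power_int_diff split: ix.split)
lemma shiP1: "q \<noteq> 0 \<Longrightarrow> shiftT (inverse q) P1 (pt q s a b c e) = pt q s (a-1) b c e"
  by (rule ext) (simp add: shiftT_def pt_def power_int_diff field_simps split: ix.split)
lemma shiP2: "q \<noteq> 0 \<Longrightarrow> shiftT (inverse q) P2 (pt q s a b c e) = pt q s a (b-1) c e"
  by (rule ext) (simp add: shiftT_def pt_def power_int_diff field_simps split: ix.split)
lemma scal: "q \<noteq> 0 \<Longrightarrow> (\<lambda>i. q * pt q s a b c e i) = pt q s (a+1) (b+1) (c-1) (e-1)"
  by (rule ext) (auto simp add: pt_def power_int_diff power_int_add power_int_minus field_simps split: ix.split)

lemma alg1:
  fixes A Bv C D E F x y :: complex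
  assumes "Bv\<noteq>0" "C\<noteq>0" "D\<noteq>0" "y\<noteq>0" "x*Bv*C - y*D*A = (x-y)*E*F"
  shows "(A/Bv)/(C/D) - x/y = -(x-y)/y*(E*F)/(Bv*C)"
proof -
  have "(A/Bv)/(C/D) - x/y = -(x*Bv*C - y*D*A)/(y*Bv*C)" using assms(1-4) by (simp add: field_simps)
  also have "\<dots> = -((x-y)*E*F)/(y*Bv*C)" using assms(5) by simp
  finally show ?thesis using assms(1-4) by (simp add: field_simps)
qed

lemma alg2:
  fixes A Bv C D E F x y C' D' P1 P2 :: complex
  assumes "Bv\<noteq>0" "C\<noteq>0" "D\<noteq>0" "x\<noteq>0" "P2 \<noteq> 0" "C' = P1*C" "D' = P2*D"
     "x*D'*A - y*Bv*C' = (x-y)*E*F"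
  shows "(A/Bv)/(C/D) - P1/P2*(y/x) = (x-y)/x*(E*F*D)/(Bv*C*D')"
proof -
  have "(A/Bv)/(C/D) - P1/P2*(y/x) = D*(x*D'*A - y*Bv*C')/(Bv*C*D'*x)"
    using assms(1-7) by (simp add: field_simps)
  also have "\<dots> = D*((x-y)*E*F)/(Bv*C*D'*x)" using assms(8) by simp
  finally show ?thesis using assms(1-7) by (simp add: field_simps)
qed

context
  fixes q :: complex and \<tau> :: "int \<Rightarrow> int \<Rightarrow> (ix \<Rightarrow> complex) \<Rightarrow> complex"
    and d :: "int \<Rightarrow> int \<Rightarrow> complex" and s :: "ix \<Rightarrow> complex"
  assumes q: "q \<noteq> 0"
    and hier: "qUC_hierarchy q \<tau>"
    and nz: "nowhere_vanishing \<tau>"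
    and homog: "\<forall>m n s. s \<in> tdom \<longrightarrow> \<tau> m n (\<lambda>i. q * s i) = q powr (d m n) * \<tau> m n s"
    and s: "s \<in> tdom"
begin

lemma tnz[simp]: "\<tau> M N (pt q s a b c e) \<noteq> 0"
  using nz pt_in[OF s q] unfolding nowhere_vanishing_def by blast

lemma ptnz[simp]: "pt q s a b c e i \<noteq> 0"
  using pt_in[OF s q] unfolding tdom_def by blast

lemma Pnz[simp]: "q powr z \<noteq> 0" using q by simp

lemma hom: "\<tau> M N (pt q s (a+1) (b+1) (c-1) (e-1)) = q powr d M N * \<tau> M N (pt q s a b c e)"
  using homog pt_in[OF s q] scal[OF q] by metis

lemma bil: "pt q s a b c e i * \<tau> M (N+1) (shiftT q i (pt q s a b c e)) * \<tau> (M+1) N (shiftT q j (pt q s a b c e))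
   - pt q s a b c e j * \<tau> M (N+1) (shiftT q j (pt q s a b c e)) * \<tau> (M+1) N (shiftT q i (pt q s a b c e))
   = (pt q s a b c e i - pt q s a b c e j) * \<tau> M N (shiftT q j (shiftT q i (pt q s a b c e))) * \<tau> (M+1) (N+1) (pt q s a b c e)"
  using hier pt_in[OF s q] unfolding qUC_hierarchy_def Top_def by blast

lemma cf: "cfun q d M N = q powr d (M+1) N / q powr d M (N+1)"
  by (simp add: cfun_def powr_diff)

lemma FA: "gfun q \<tau> M N (pt q s a b c e) - pt q s a b c e P1 / pt q s a b c e N2
  = -(pt q s a b c e P1 - pt q s a b c e N2)/pt q s a b c e N2 *
    (\<tau> M N (pt q s (a+1) b (c+1) (e+1)) * \<tau> (M+1) (N+1) (pt q s a b (c+1) e))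
    / (\<tau> M (N+1) (pt q s (a+1) b (c+1) e) * \<tau> (M+1) N (pt q s a b (c+1) (e+1)))"
proof -
  have eq: "pt q s a b c e P1 * \<tau> M (N+1) (pt q s (a+1) b (c+1) e) * \<tau> (M+1) N (pt q s a b (c+1) (e+1))
   - pt q s a b c e N2 * \<tau> M (N+1) (pt q s a b (c+1) (e+1)) * \<tau> (M+1) N (pt q s (a+1) b (c+1) e)
   = (pt q s a b c e P1 - pt q s a b c e N2) * \<tau> M N (pt q s (a+1) b (c+1) (e+1)) * \<tau> (M+1) (N+1) (pt q s a b (c+1) e)"
    using bil[of a b "c+1" e P1 M N N2] by (simp add: shP1 shN2 q pt_comp)
  show ?thesis
    unfolding gfun_def wfun_def Top_def shP1[OF q] shN1[OF q] shN2[OF q]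
    by (rule alg1) (use eq q in auto)
qed

lemma FC: "ffun q \<tau> M N (pt q s a b c e) - pt q s a b c e P1 / pt q s a b c e N1
  = -(pt q s a b c e P1 - pt q s a b c e N1)/pt q s a b c e N1 *
    (\<tau> M N (pt q s (a+1) b (c+1) e) * \<tau> (M+1) (N+1) (pt q s a b c e))
    / (\<tau> M (N+1) (pt q s (a+1) b c e) * \<tau> (M+1) N (pt q s a b (c+1) e))"
proof -
  have eq: "pt q s a b c e P1 * \<tau> M (N+1) (pt q s (a+1) b c e) * \<tau> (M+1) N (pt q s a b (c+1) e)
   - pt q s a b c e N1 * \<tau> M (N+1) (pt q s a b (c+1) e) * \<tau> (M+1) N (pt q s (a+1) b c e)
   = (pt q s a b c e P1 - pt q s a b c e N1) * \<tau> M N (pt q s (a+1) b (c+1) e) * \<tau> (M+1) (N+1) (pt q s a b c e)"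
    using bil[of a b c e P1 M N N1] by (simp add: shP1 shN1 q)
  show ?thesis
    unfolding ffun_def wfun_def Top_def shP1[OF q] shN1[OF q]
    by (rule alg1) (use eq q in auto)
qed

lemma FB: "gfun q \<tau> M N (pt q s a b c e) - cfun q d M N * (pt q s a b c e N1 / pt q s a b c e P2)
  = (pt q s a b c e P2 - pt q s a b c e N1)/pt q s a b c e P2 *
    (\<tau> M N (pt q s (a+1) (b+1) (c+1) e) * \<tau> (M+1) (N+1) (pt q s (a+1) b c e) * \<tau> M (N+1) (pt q s a b (c+1) (e+1)))
    / (\<tau> M (N+1) (pt q s (a+1) b (c+1) e) * \<tau> (M+1) N (pt q s a b (c+1) (e+1)) * \<tau> M (N+1) (pt q s (a+1) (b+1) c e))"
proof -
  have eq: "pt q s a b c e P2 * \<tau> M (N+1) (pt q s (a+1) (b+1) c e) * \<tau> (M+1) N (pt q s (a+1) b (c+1) e)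
   - pt q s a b c e N1 * \<tau> M (N+1) (pt q s (a+1) b (c+1) e) * \<tau> (M+1) N (pt q s (a+1) (b+1) c e)
   = (pt q s a b c e P2 - pt q s a b c e N1) * \<tau> M N (pt q s (a+1) (b+1) (c+1) e) * \<tau> (M+1) (N+1) (pt q s (a+1) b c e)"
    using bil[of "a+1" b c e P2 M N N1] by (simp add: shP2 shN1 q pt_comp)
  have h1: "\<tau> (M+1) N (pt q s (a+1) (b+1) c e) = q powr d (M+1) N * \<tau> (M+1) N (pt q s a b (c+1) (e+1))"
    using hom[of "M+1" N a b "c+1" "e+1"] by simp
  have h2: "\<tau> M (N+1) (pt q s (a+1) (b+1) c e) = q powr d M (N+1) * \<tau> M (N+1) (pt q s a b (c+1) (e+1))"
    using hom[of M "N+1" a b "c+1" "e+1"] by simp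
  show ?thesis
    unfolding gfun_def wfun_def Top_def shP1[OF q] shN1[OF q] shN2[OF q] cf
    by (rule alg2[OF _ _ _ _ _ h1 h2]) (use eq q in auto)
qed

lemma ptN2: "pt q s a b c (e-1) N2 = q * pt q s a b c e N2"
proof -
  have "q powi (1 + - e) = q powi 1 * q powi (-e)" using power_int_add[of q 1 "-e"] q by blast
  then show ?thesis by (simp add: pt_comp)
qed

lemma FD: "ffun q \<tau> M N (pt q s a b c e) - q * cfun q d M N * (pt q s a b c e N2 / pt q s a b c e P2)
  = (pt q s a b c e P2 - q * pt q s a b c e N2)/pt q s a b c e P2 *
    (\<tau> M N (pt q s (a+1) (b+1) c e) * \<tau> (M+1) (N+1) (pt q s (a+1) b c (e-1)) * \<tau> M (N+1) (pt q s a b (c+1) e))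
    / (\<tau> M (N+1) (pt q s (a+1) b c e) * \<tau> (M+1) N (pt q s a b (c+1) e) * \<tau> M (N+1) (pt q s (a+1) (b+1) c (e-1)))"
proof -
  have eq: "pt q s a b c e P2 * \<tau> M (N+1) (pt q s (a+1) (b+1) c (e-1)) * \<tau> (M+1) N (pt q s (a+1) b c e)
   - q * pt q s a b c e N2 * \<tau> M (N+1) (pt q s (a+1) b c e) * \<tau> (M+1) N (pt q s (a+1) (b+1) c (e-1))
   = (pt q s a b c e P2 - q * pt q s a b c e N2) * \<tau> M N (pt q s (a+1) (b+1) c e) * \<tau> (M+1) (N+1) (pt q s (a+1) b c (e-1))"
  proof -
    have "q powi (1 + - e) = q powi 1 * q powi (-e)" using power_int_add[of q 1 "-e"] q by blast
    then show ?thesis using bil[of "a+1" b c "e-1" P2 M N N2] by (simp add: shP2 shN2 q pt_comp mult_ac)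
  qed
  have h1: "\<tau> (M+1) N (pt q s (a+1) (b+1) c (e-1)) = q powr d (M+1) N * \<tau> (M+1) N (pt q s a b (c+1) e)"
    using hom[of "M+1" N a b "c+1" "e"] by simp
  have h2: "\<tau> M (N+1) (pt q s (a+1) (b+1) c (e-1)) = q powr d M (N+1) * \<tau> M (N+1) (pt q s a b (c+1) e)"
    using hom[of M "N+1" a b "c+1" "e"] by simp
  have "ffun q \<tau> M N (pt q s a b c e) - q * cfun q d M N * (pt q s a b c e N2 / pt q s a b c e P2)
     = ffun q \<tau> M N (pt q s a b c e) - q powr d (M+1) N / q powr d M (N+1) * ((q * pt q s a b c e N2) / pt q s a b c e P2)"
    by (simp add: cf)
  also have "\<dots> = (pt q s a b c e P2 - q * pt q s a b c e N2)/pt q s a b c e P2 *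
    (\<tau> M N (pt q s (a+1) (b+1) c e) * \<tau> (M+1) (N+1) (pt q s (a+1) b c (e-1)) * \<tau> M (N+1) (pt q s a b (c+1) e))
    / (\<tau> M (N+1) (pt q s (a+1) b c e) * \<tau> (M+1) N (pt q s a b (c+1) e) * \<tau> M (N+1) (pt q s (a+1) (b+1) c (e-1)))"
    unfolding ffun_def wfun_def Top_def shP1[OF q] shN1[OF q]
    by (rule alg2[OF _ _ _ _ _ h1 h2]) (use eq q in auto)
  finally show ?thesis .
qed


lemma S1:
  assumes h1: "gfun q \<tau> m (n+1) (pt q s 0 0 0 0) - pt q s 0 0 0 0 P1 / pt q s 0 0 0 0 N2 \<noteq> 0"
    and h2: "gfun q \<tau> (m+1) n (pt q s 0 0 0 0) - cfun q d (m+1) n * (pt q s 0 0 0 0 N1 / pt q s 0 0 0 0 P2) \<noteq> 0"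
  shows "TT q (ffun q \<tau> m n) (pt q s 0 0 0 0) / ffun q \<tau> (m+1) (n+1) (pt q s 0 0 0 0)
      = cfun q d m n / cfun q d m (n+1) *
        ((gfun q \<tau> (m+1) n (pt q s 0 0 0 0) - pt q s 0 0 0 0 P1 / pt q s 0 0 0 0 N2) * (gfun q \<tau> m (n+1) (pt q s 0 0 0 0) - cfun q d m (n+1) * (pt q s 0 0 0 0 N1 / pt q s 0 0 0 0 P2)))
        / ((gfun q \<tau> m (n+1) (pt q s 0 0 0 0) - pt q s 0 0 0 0 P1 / pt q s 0 0 0 0 N2) * (gfun q \<tau> (m+1) n (pt q s 0 0 0 0) - cfun q d (m+1) n * (pt q s 0 0 0 0 N1 / pt q s 0 0 0 0 P2)))"
proof -
  note fa1 = FA[of "m+1" n 0 0 0 0] and fa2 = FA[of m "n+1" 0 0 0 0]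
   and fb1 = FB[of "m+1" n 0 0 0 0] and fb2 = FB[of m "n+1" 0 0 0 0]
  have k1: "pt q s 0 0 0 0 P1 - pt q s 0 0 0 0 N2 \<noteq> 0" using h1 unfolding fa2 by auto
  have k2: "pt q s 0 0 0 0 P2 - pt q s 0 0 0 0 N1 \<noteq> 0" using h2 unfolding fb1 by auto
  show ?thesis
    unfolding fa1 fa2 fb1 fb2
    unfolding TT_def ffun_def wfun_def Top_def shP1[OF q] shN1[OF q] shP2[OF q] cf
    using k1 k2 apply simp
    using hom[of "m+1" n 1 0 1 1] hom[of m "n+1" 1 0 1 1] hom[of "m+1" "n+1" 0 0 1 1] hom[of m "2+n" 0 0 1 1]
    by (simp add: q mult_ac)
qed


lemma TTpt: "TT q F (pt q s 0 0 0 0) = F (pt q s 1 1 0 0)"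
  by (simp add: TT_def Top_def shP1 shP2 q)

lemma e1: "q * (pt q s 0 0 0 0 P1 / pt q s 0 0 0 0 N1) = pt q s 1 1 0 0 P1 / pt q s 1 1 0 0 N1"
  by (simp add: pt_comp)

lemma e2: "cfun q d M N * (pt q s 0 0 0 0 N2 / pt q s 0 0 0 0 P2) = q * cfun q d M N * (pt q s 1 1 0 0 N2 / pt q s 1 1 0 0 P2)"
  using q by (simp add: pt_comp)

lemma S4:
  assumes dcond: "\<forall>m n. d m n + d (m+1) (n+1) = d m (n+1) + d (m+1) n"
  and h1: "TT q (ffun q \<tau> m (n+1)) (pt q s 0 0 0 0) - q * (pt q s 0 0 0 0 P1 / pt q s 0 0 0 0 N1) \<noteq> 0"
  and h2: "TT q (ffun q \<tau> (m+1) n) (pt q s 0 0 0 0) - cfun q d (m+1) n * (pt q s 0 0 0 0 N2 / pt q s 0 0 0 0 P2) \<noteq> 0"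
  shows "TT q (gfun q \<tau> m n) (pt q s 0 0 0 0)
      = cfun q d (m+1) n / cfun q d (m+1) (n+1) *
        ((TT q (ffun q \<tau> (m+1) n) (pt q s 0 0 0 0) - q * (pt q s 0 0 0 0 P1 / pt q s 0 0 0 0 N1)) * (TT q (ffun q \<tau> m (n+1)) (pt q s 0 0 0 0) - cfun q d m (n+1) * (pt q s 0 0 0 0 N2 / pt q s 0 0 0 0 P2)))
        / ((TT q (ffun q \<tau> m (n+1)) (pt q s 0 0 0 0) - q * (pt q s 0 0 0 0 P1 / pt q s 0 0 0 0 N1)) * (TT q (ffun q \<tau> (m+1) n) (pt q s 0 0 0 0) - cfun q d (m+1) n * (pt q s 0 0 0 0 N2 / pt q s 0 0 0 0 P2)))
        * gfun q \<tau> (m+1) (n+1) (pt q s 0 0 0 0)"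
proof -
  note fc1 = FC[of "m+1" n 1 1 0 0] and fc2 = FC[of m "n+1" 1 1 0 0]
   and fd1 = FD[of "m+1" n 1 1 0 0] and fd2 = FD[of m "n+1" 1 1 0 0]
  have k1: "pt q s 1 1 0 0 P1 - pt q s 1 1 0 0 N1 \<noteq> 0" using h1 unfolding TTpt e1 fc2 by auto
  have k2: "pt q s 1 1 0 0 P2 - q * pt q s 1 1 0 0 N2 \<noteq> 0" using h2 unfolding TTpt e2 fd1 by auto
  have ex: "d (2+m) n = d (m+1) n + d m (2+n) + d (2+m) (n+1) - d m (n+1) - d (m+1) (2+n)"
    using dcond[rule_format, of "m+1" n] dcond[rule_format, of m "n+1"]
    by (simp add: algebra_simps)
  have Pq: "q powr d (2+m) n = q powr d (m+1) n * q powr d m (2+n) * q powr d (2+m) (n+1) / (q powr d m (n+1) * q powr d (m+1) (2+n))"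
    unfolding ex by (simp add: powr_add powr_diff)
  show ?thesis
    unfolding TTpt e1 e2 fc1 fc2 fd1 fd2
    unfolding gfun_def wfun_def Top_def shP1[OF q] shN1[OF q] shN2[OF q] cf
    using k1 k2 apply simp
    using hom[of m "n+1" 1 1 1 1] hom[of "m+1" n 1 1 1 1] hom[of "m+1" "2+n" 1 0 1 0] hom[of "2+m" "n+1" 1 0 1 0]
      hom[of "m+1" "n+1" 1 1 1 0] hom[of m "2+n" 1 1 1 0] hom[of "2+m" "n+1" 0 0 1 1] hom[of "m+1" "2+n" 0 0 1 1]
    apply (simp add: q mult_ac Pq)
    done
qed


lemma fnz: "ffun q \<tau> M N (pt q s a b c e) \<noteq> 0"
  unfolding ffun_def wfun_def Top_def shP1[OF q] shN1[OF q] by simp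

lemma gnz: "gfun q \<tau> M N (pt q s a b c e) \<noteq> 0"
  unfolding gfun_def wfun_def Top_def shP1[OF q] shN1[OF q] shN2[OF q] by simp

end

lemma pt_pt: "q \<noteq> 0 \<Longrightarrow> pt q (pt q t a b c e) a' b' c' e' = pt q t (a+a') (b+b') (c+c') (e+e')"
  using power_int_add[of q "-c" "-c'"] power_int_add[of q "-e" "-e'"]
  by (intro ext) (auto simp: pt_def power_int_add split: ix.split)

lemma TTinv_pt: "q \<noteq> 0 \<Longrightarrow> TTinv q F t = F (pt q t (-1) (-1) 0 0)"
  using shiP1[of q t 0 0 0 0] shiP2[of q t "-1" 0 0 0] by (simp add: TTinv_def Top_def pt_0)

lemma TT_pt': "q \<noteq> 0 \<Longrightarrow> TT q F (pt q t (-1) (-1) 0 0) = F t"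
  using shP1[of q t "-1" "-1" 0 0] shP2[of q t 0 "-1" 0 0] by (simp add: TT_def Top_def pt_0)

theorem mainTheorem5:
  fixes q :: complex
    and \<tau> :: "int \<Rightarrow> int \<Rightarrow> (ix \<Rightarrow> complex) \<Rightarrow> complex"
    and d :: "int \<Rightarrow> int \<Rightarrow> complex"
    and m n :: int
    and t :: "ix \<Rightarrow> complex"
  assumes q: "q \<noteq> 0"
    and hier: "qUC_hierarchy q \<tau>"
    and nz: "nowhere_vanishing \<tau>"
    and homog: "\<forall>m n s. s \<in> tdom \<longrightarrow> \<tau> m n (\<lambda>i. q * s i) = q powr (d m n) * \<tau> m n s"
    and dcond: "\<forall>m n. d m n + d (m+1) (n+1) = d m (n+1) + d (m+1) n"
    and t: "t \<in> tdom"
  shows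
   "(ffun q \<tau> (m+1) (n+1) t \<noteq> 0 \<and>
     gfun q \<tau> m (n+1) t - t P1 / t N2 \<noteq> 0 \<and>
     gfun q \<tau> (m+1) n t - cfun q d (m+1) n * (t N1 / t P2) \<noteq> 0 \<and>
     cfun q d m (n+1) \<noteq> 0 \<longrightarrow>
      TT q (ffun q \<tau> m n) t / ffun q \<tau> (m+1) (n+1) t
      = cfun q d m n / cfun q d m (n+1) *
        ((gfun q \<tau> (m+1) n t - t P1 / t N2) * (gfun q \<tau> m (n+1) t - cfun q d m (n+1) * (t N1 / t P2)))
        / ((gfun q \<tau> m (n+1) t - t P1 / t N2) * (gfun q \<tau> (m+1) n t - cfun q d (m+1) n * (t N1 / t P2))))
  \<and>
   (TTinv q (gfun q \<tau> (m+1) (n+1)) t \<noteq> 0 \<and>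
     ffun q \<tau> m (n+1) t - t P1 / t N1 \<noteq> 0 \<and>
     ffun q \<tau> (m+1) n t - q * cfun q d (m+1) n * (t N2 / t P2) \<noteq> 0 \<and>
     cfun q d (m+1) (n+1) \<noteq> 0 \<longrightarrow>
      gfun q \<tau> m n t / TTinv q (gfun q \<tau> (m+1) (n+1)) t
      = cfun q d (m+1) n / cfun q d (m+1) (n+1) *
        ((ffun q \<tau> (m+1) n t - t P1 / t N1) * (ffun q \<tau> m (n+1) t - q * cfun q d m (n+1) * (t N2 / t P2)))
        / ((ffun q \<tau> m (n+1) t - t P1 / t N1) * (ffun q \<tau> (m+1) n t - q * cfun q d (m+1) n * (t N2 / t P2))))
  \<and>
   (gfun q \<tau> m (n+1) t - t P1 / t N2 \<noteq> 0 \<and>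
     gfun q \<tau> (m+1) n t - cfun q d (m+1) n * (t N1 / t P2) \<noteq> 0 \<and>
     cfun q d m (n+1) \<noteq> 0 \<longrightarrow>
      TT q (ffun q \<tau> m n) t
      = cfun q d m n / cfun q d m (n+1) *
        ((gfun q \<tau> (m+1) n t - t P1 / t N2) * (gfun q \<tau> m (n+1) t - cfun q d m (n+1) * (t N1 / t P2)))
        / ((gfun q \<tau> m (n+1) t - t P1 / t N2) * (gfun q \<tau> (m+1) n t - cfun q d (m+1) n * (t N1 / t P2)))
        * ffun q \<tau> (m+1) (n+1) t)
  \<and>
   (TT q (ffun q \<tau> m (n+1)) t - q * (t P1 / t N1) \<noteq> 0 \<and>
     TT q (ffun q \<tau> (m+1) n) t - cfun q d (m+1) n * (t N2 / t P2) \<noteq> 0 \<and>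
     cfun q d (m+1) (n+1) \<noteq> 0 \<longrightarrow>
      TT q (gfun q \<tau> m n) t
      = cfun q d (m+1) n / cfun q d (m+1) (n+1) *
        ((TT q (ffun q \<tau> (m+1) n) t - q * (t P1 / t N1)) * (TT q (ffun q \<tau> m (n+1)) t - cfun q d m (n+1) * (t N2 / t P2)))
        / ((TT q (ffun q \<tau> m (n+1)) t - q * (t P1 / t N1)) * (TT q (ffun q \<tau> (m+1) n) t - cfun q d (m+1) n * (t N2 / t P2)))
        * gfun q \<tau> (m+1) (n+1) t)"
proof -
  define s' where "s' = pt q t (-1) (-1) 0 0"
  have s'd: "s' \<in> tdom" unfolding s'_def using pt_in[OF t q] .
  have sc1: "q * (s' P1 / s' N1) = t P1 / t N1" unfolding s'_def using q
    by (simp add: pt_comp power_int_minus field_simps)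
  have sc2: "\<And>M N. cfun q d M N * (s' N2 / s' P2) = q * cfun q d M N * (t N2 / t P2)" unfolding s'_def using q
    by (simp add: pt_comp power_int_minus field_simps)
  have TTs: "\<And>F. TT q F s' = F t" unfolding s'_def using TT_pt'[OF q] .
  have TTi: "\<And>F. TTinv q F t = F s'" unfolding s'_def using TTinv_pt[OF q] .
  have S4': "ffun q \<tau> m (n+1) t - t P1 / t N1 \<noteq> 0 \<Longrightarrow>
     ffun q \<tau> (m+1) n t - q * cfun q d (m+1) n * (t N2 / t P2) \<noteq> 0 \<Longrightarrow>
     gfun q \<tau> m n t = cfun q d (m+1) n / cfun q d (m+1) (n+1) *
        ((ffun q \<tau> (m+1) n t - t P1 / t N1) * (ffun q \<tau> m (n+1) t - q * cfun q d m (n+1) * (t N2 / t P2)))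
        / ((ffun q \<tau> m (n+1) t - t P1 / t N1) * (ffun q \<tau> (m+1) n t - q * cfun q d (m+1) n * (t N2 / t P2)))
        * gfun q \<tau> (m+1) (n+1) s'"
    using S4[OF q hier nz homog s'd dcond, of m n] unfolding pt_0 TTs sc1 sc2 by blast
  have fz: "ffun q \<tau> (m+1) (n+1) t \<noteq> 0" using fnz[OF q hier nz homog t, of "m+1" "n+1" 0 0 0 0] unfolding pt_0 .
  have gz: "gfun q \<tau> (m+1) (n+1) s' \<noteq> 0" unfolding s'_def using gnz[OF q hier nz homog t] .
  have dl: "\<And>G x R. (G::complex) \<noteq> 0 \<Longrightarrow> x = R * G \<Longrightarrow> x / G = R" by simp
  have ml: "\<And>F X R. (F::complex) \<noteq> 0 \<Longrightarrow> X / F = R \<Longrightarrow> X = R * F" by (simp add: divide_eq_eq)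
  show ?thesis
    apply (intro conjI impI)
    subgoal using S1[OF q hier nz homog t] unfolding pt_0 by blast
    subgoal apply (elim conjE) apply (unfold TTi) apply (rule dl[OF gz]) apply (rule S4') by assumption+
    subgoal apply (elim conjE) apply (rule ml[OF fz]) using S1[OF q hier nz homog t] unfolding pt_0 by blast
    subgoal using S4[OF q hier nz homog t dcond] unfolding pt_0 by blast
    done
qed

end
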